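(* Fix $m\ge 3$ and $a=(a_1,\dots,a_m),\,b=(b_1,\dots,b_m)\in S_m$. (i) Suppose there is a number $c_0=c_0(a,b)$ such that $$\widetilde\Omega^{a_1}_{i_1i_2}\widetilde\Omega^{a_2}_{i_2i_3}\cdots\widetilde\Omega^{a_m}_{i_mi_1}=e^{c_0\rho}\,\widetilde\Omega^{b_1}_{i_1i_2}\widetilde\Omega^{b_2}_{i_2i_3}\cdots\widetilde\Omega^{b_m}_{i_mi_1}\qquad(\ast)$$ for all distinct $i_1,\dots,i_m\in\{1,\dots,n\}$. Then $g_{n,m}(a)/g_{n,m}(b)=e^{c_0\rho}$. (ii) If $m$ is odd, there is no pair $(a,b)\in S_m\times S_m$ and number $c_0>0$ such that $(\ast)$ holds identically, i.e. for all distinct indices and all values of the parameters $\rho,\gamma,\alpha_1,\beta_1,\dots,\alpha_n,\beta_n$. (iii) If $m$ is even, let $N=m/2$ and let $x_1,y_1,\dots,x_N,y_N\in\{0,1\}$ satisfy $c_0:=(x_1+\dots+x_N)-(y_1+\dots+y_N)>0$. Put $$a=(1x_1,\;y_10,\;1x_2,\;y_20,\;\dots,\;1x_N,\;y_N0),\qquad b=(0x_1,\;y_11,\;0x_2,\;y_21,\;\dots,\;0x_N,\;y_N1),$$ where e.g. "$1x_1$" denotes the edge code whose first digit is $1$ and second digit is $x_1$. Then $(\ast)$ holds identically with this $c_0$, so that $G_{n,m}(a)=\sum_{i_1,\dots,i_m\,(\mathrm{dist})}A^{1x_1}_{i_1i_2}A^{y_10}_{i_2i_3}\cdots A^{1x_N}_{i_{m-1}i_m}A^{y_N0}_{i_mi_1}$,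 $G_{n,m}(b)=\sum_{i_1,\dots,i_m\,(\mathrm{dist})}A^{0x_1}_{i_1i_2}A^{y_11}_{i_2i_3}\cdots A^{0x_N}_{i_{m-1}i_m}A^{y_N1}_{i_mi_1}$, and $g_{n,m}(a)/g_{n,m}(b)=e^{c_0\rho}$. (iv) Conversely, for any pair $(a',b')\in S_m\times S_m$ for which $(\ast)$ holds identically with some $c_0>0$, there is a pair $(a,b)$ as in (iii) such that the generalized $m$-cycle of Type-$a'$ is isomorphic to that of Type-$a$ and the generalized $m$-cycle of Type-$b'$ is isomorphic to that of Type-$b$.
   Context: The $p_1$ model: a directed network on nodes $\{1,\dots,n\}$ has adjacency matrix $A\in\{0,1\}^{n\times n}$ with $A_{ii}=0$ ($A_{ij}=1$ iff there is a directed edge $i\to j$). The pairs $(A_{ij},A_{ji})$, $1\le i<j\le n$, are independent, and for real parameters $\rho,\gamma,\alpha_1,\beta_1,\dots,\alpha_n,\beta_n$ with $\sum_i\alpha_i=\sum_i\beta_i=0$, for $a,b\in\{0,1\}$ and $i\ne j$, $\mathbb P(A_{ij}=a,A_{ji}=b)=K_{ij}\exp\big(a(\gamma+\alpha_i+\beta_j)+b(\gamma+\alpha_j+\beta_i)+ab\rho\big)$, with $K_{ij}=[1+e^{\gamma+\alpha_i+\beta_j}+e^{\gamma+\alpha_j+\beta_i}+e^{2\gamma+\alpha_i+\beta_j+\alpha_j+\beta_i+\rho}]^{-1}$. Let $\mu_i=e^{\gamma/2+\alpha_i}$, $\nu_i=e^{\gamma/2+\beta_i}$, $\eta_i=\mu_i\nu_i$.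 Edge codes: for $i\ne j$ the edge type between $i$ and $j$ (read from $i$ to $j$) is one of $00$ (no edge), $10$ (edge $i\to j$ only), $01$ (edge $j\to i$ only), $11$ (double edge). Let $\tilde J_n$ be the all-ones $n\times n$ matrix minus the identity and $\circ$ the entrywise product; $A^{11}=A\circ A'$, $A^{00}=(\tilde J_n-A)\circ(\tilde J_n-A')$, $A^{10}=A\circ(\tilde J_n-A')$, $A^{01}=(A^{10})'$. For $i\ne j$ set $\widetilde\Omega^{00}_{ij}=1$, $\widetilde\Omega^{10}_{ij}=\mu_i\nu_j$, $\widetilde\Omega^{01}_{ij}=\mu_j\nu_i$, $\widetilde\Omega^{11}_{ij}=e^\rho\eta_i\eta_j$, and $\Omega^c_{ij}=K_{ij}\widetilde\Omega^c_{ij}$ for $c\in\{00,10,01,11\}$ (so $\Omega^c_{ij}=\mathbb P(A^c_{ij}=1)$). $S_m$ is the set of $a=(a_1,\dots,a_m)$ with each $a_k\in\{00,10,01,11\}$. A generalized $m$-cycle of Type-$a$ consists of $m$ distinct nodes $i_1,\dots,i_m$ such that the edge type between $i_k$ and $i_{k+1}$ (with $i_{m+1}=i_1$), read from $i_k$ to $i_{k+1}$, is $a_k$; two such cycles are isomorphic if the corresponding directed graphs on $m$ vertices are isomorphic. Define $G_{n,m}(a)=\sum_{i_1,\dots,i_m\,(\mathrm{dist})}A^{a_1}_{i_1i_2}A^{a_2}_{i_2i_3}\cdots A^{a_m}_{i_mi_1}$ (sum over distinct indices) and $g_{n,m}(a)=\mathbb E[G_{n,m}(a)]=\sum_{i_1,\dots,i_m\,(\mathrm{dist})}\Omega^{a_1}_{i_1i_2}\cdots\Omega^{a_m}_{i_mi_1}$.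 *)

theory Defs
  imports Complex_Main
begin

text \<open>Nodes are 0,...,n-1. Edge codes are pairs of digits (d1,d2) :: bool \<times> bool,
  where the code read from i to j has d1 = [edge i->j] and d2 = [edge j->i];
  so (False,False) = 00, (True,False) = 10, (False,True) = 01, (True,True) = 11.
  A Type-a vector (a_1..a_m) is a list of codes of length m.\<close>

type_synonym code = "bool \<times> bool"

definition mu :: "real \<Rightarrow> (nat \<Rightarrow> real) \<Rightarrow> nat \<Rightarrow> real" where
  "mu \<gamma> \<alpha> i = exp (\<gamma>/2 + \<alpha> i)"

definition nu :: "real \<Rightarrow> (nat \<Rightarrow> real) \<Rightarrow> nat \<Rightarrow> real" where
  "nu \<gamma> \<beta> i = exp (\<gamma>/2 + \<beta> i)"

definition eta :: "real \<Rightarrow> (nat \<Rightarrow> real) \<Rightarrow> (nat \<Rightarrow> real) \<Rightarrow> nat \<Rightarrow> real" where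
  "eta \<gamma> \<alpha> \<beta> i = mu \<gamma> \<alpha> i * nu \<gamma> \<beta> i"

definition Kc :: "real \<Rightarrow> real \<Rightarrow> (nat \<Rightarrow> real) \<Rightarrow> (nat \<Rightarrow> real) \<Rightarrow> nat \<Rightarrow> nat \<Rightarrow> real" where
  "Kc \<rho> \<gamma> \<alpha> \<beta> i j = 1 / (1 + exp (\<gamma> + \<alpha> i + \<beta> j) + exp (\<gamma> + \<alpha> j + \<beta> i)
      + exp (2*\<gamma> + \<alpha> i + \<beta> j + \<alpha> j + \<beta> i + \<rho>))"

definition Omega_t :: "real \<Rightarrow> real \<Rightarrow> (nat \<Rightarrow> real) \<Rightarrow> (nat \<Rightarrow> real) \<Rightarrow> code \<Rightarrow> nat \<Rightarrow> nat \<Rightarrow> real" where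
  "Omega_t \<rho> \<gamma> \<alpha> \<beta> c i j =
     (case c of
        (False, False) \<Rightarrow> 1
      | (True, False) \<Rightarrow> mu \<gamma> \<alpha> i * nu \<gamma> \<beta> j
      | (False, True) \<Rightarrow> mu \<gamma> \<alpha> j * nu \<gamma> \<beta> i
      | (True, True) \<Rightarrow> exp \<rho> * eta \<gamma> \<alpha> \<beta> i * eta \<gamma> \<alpha> \<beta> j)"

definition Omega :: "real \<Rightarrow> real \<Rightarrow> (nat \<Rightarrow> real) \<Rightarrow> (nat \<Rightarrow> real) \<Rightarrow> code \<Rightarrow> nat \<Rightarrow> nat \<Rightarrow> real" where
  "Omega \<rho> \<gamma> \<alpha> \<beta> c i j = Kc \<rho> \<gamma> \<alpha> \<beta> i j * Omega_t \<rho> \<gamma> \<alpha> \<beta> c i j"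

definition dist_tuples :: "nat \<Rightarrow> nat \<Rightarrow> nat list set" where
  "dist_tuples n m = {xs. length xs = m \<and> distinct xs \<and> set xs \<subseteq> {..<n}}"

definition cyc_prod :: "(code \<Rightarrow> nat \<Rightarrow> nat \<Rightarrow> real) \<Rightarrow> code list \<Rightarrow> nat list \<Rightarrow> real" where
  "cyc_prod f a xs = (\<Prod>k<length a. f (a ! k) (xs ! k) (xs ! (Suc k mod length a)))"

definition g_nm :: "real \<Rightarrow> real \<Rightarrow> (nat \<Rightarrow> real) \<Rightarrow> (nat \<Rightarrow> real) \<Rightarrow> nat \<Rightarrow> code list \<Rightarrow> real" where
  "g_nm \<rho> \<gamma> \<alpha> \<beta> n a =
     (\<Sum>xs\<in>dist_tuples n (length a). cyc_prod (Omega \<rho> \<gamma> \<alpha> \<beta>) a xs)"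

definition admissible :: "nat \<Rightarrow> (nat \<Rightarrow> real) \<Rightarrow> (nat \<Rightarrow> real) \<Rightarrow> bool" where
  "admissible n \<alpha> \<beta> \<longleftrightarrow> (\<Sum>i<n. \<alpha> i) = 0 \<and> (\<Sum>i<n. \<beta> i) = 0"

definition star_at :: "real \<Rightarrow> real \<Rightarrow> (nat \<Rightarrow> real) \<Rightarrow> (nat \<Rightarrow> real) \<Rightarrow> nat \<Rightarrow> code list \<Rightarrow> code list \<Rightarrow> real \<Rightarrow> bool" where
  "star_at \<rho> \<gamma> \<alpha> \<beta> n a b c0 \<longleftrightarrow>
     (\<forall>xs\<in>dist_tuples n (length a).
        cyc_prod (Omega_t \<rho> \<gamma> \<alpha> \<beta>) a xs = exp (c0 * \<rho>) * cyc_prod (Omega_t \<rho> \<gamma> \<alpha> \<beta>) b xs)"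

definition star_ident :: "nat \<Rightarrow> code list \<Rightarrow> code list \<Rightarrow> real \<Rightarrow> bool" where
  "star_ident n a b c0 \<longleftrightarrow>
     (\<forall>\<rho> \<gamma> \<alpha> \<beta>. admissible n \<alpha> \<beta> \<longrightarrow> star_at \<rho> \<gamma> \<alpha> \<beta> n a b c0)"

text \<open>The pair (a,b) of part (iii) built from x_1..x_N, y_1..y_N (indexed 0..N-1).\<close>
definition type_a :: "nat \<Rightarrow> (nat \<Rightarrow> bool) \<Rightarrow> (nat \<Rightarrow> bool) \<Rightarrow> code list" where
  "type_a N x y = concat (map (\<lambda>k. [(True, x k), (y k, False)]) [0..<N])"

definition type_b :: "nat \<Rightarrow> (nat \<Rightarrow> bool) \<Rightarrow> (nat \<Rightarrow> bool) \<Rightarrow> code list" where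
  "type_b N x y = concat (map (\<lambda>k. [(False, x k), (y k, True)]) [0..<N])"

definition c0_of :: "nat \<Rightarrow> (nat \<Rightarrow> bool) \<Rightarrow> (nat \<Rightarrow> bool) \<Rightarrow> real" where
  "c0_of N x y = (\<Sum>k<N. of_bool (x k)) - (\<Sum>k<N. of_bool (y k))"

text \<open>Directed graph on vertices 0..m-1 of the generalized m-cycle of Type-a
  (vertex k plays the role of i_{k+1}).\<close>
definition cycle_digraph :: "code list \<Rightarrow> (nat \<times> nat) set" where
  "cycle_digraph a =
     {(k, Suc k mod length a) | k. k < length a \<and> fst (a ! k)} \<union>
     {(Suc k mod length a, k) | k. k < length a \<and> snd (a ! k)}"

definition digraph_iso :: "nat \<Rightarrow> (nat \<times> nat) set \<Rightarrow> (nat \<times> nat) set \<Rightarrow> bool" where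
  "digraph_iso m E F \<longleftrightarrow>
     (\<exists>\<pi>. bij_betw \<pi> {..<m} {..<m} \<and>
          (\<forall>u<m. \<forall>v<m. (u, v) \<in> E \<longleftrightarrow> (\<pi> u, \<pi> v) \<in> F))"

definition cycles_iso :: "code list \<Rightarrow> code list \<Rightarrow> bool" where
  "cycles_iso a b \<longleftrightarrow> length a = length b \<and>
     digraph_iso (length a) (cycle_digraph a) (cycle_digraph b)"

end

theory Submission
  imports Defs
begin


definition f1 :: "code \<Rightarrow> real" where "f1 c = of_bool (fst c)"
definition f2 :: "code \<Rightarrow> real" where "f2 c = of_bool (snd c)"
definition g11 :: "code \<Rightarrow> real" where "g11 c = of_bool (fst c \<and> snd c)"
definition Lc :: "real \<Rightarrow> real \<Rightarrow> (nat \<Rightarrow> real) \<Rightarrow> (nat \<Rightarrow> real) \<Rightarrow> code \<Rightarrow> nat \<Rightarrow> nat \<Rightarrow> real" where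
  "Lc \<rho> \<gamma> \<alpha> \<beta> c i j = g11 c * \<rho> + (f1 c + f2 c) * \<gamma> + f1 c * (\<alpha> i + \<beta> j) + f2 c * (\<alpha> j + \<beta> i)"
definition cnt :: "code list \<Rightarrow> real" where "cnt a = sum_list (map g11 a)"

lemma Omega_t_exp: "Omega_t \<rho> \<gamma> \<alpha> \<beta> c i j = exp (Lc \<rho> \<gamma> \<alpha> \<beta> c i j)"
proof -
  obtain p q where c: "c = (p, q)" by (cases c)
  show ?thesis
    by (cases p; cases q; simp add: c Omega_t_def Lc_def f1_def f2_def g11_def mu_def nu_def eta_def
        exp_add[symmetric]; simp add: field_simps)
qed

lemma cyc_exp: "cyc_prod (Omega_t \<rho> \<gamma> \<alpha> \<beta>) a xs =
   exp (\<Sum>k<length a. Lc \<rho> \<gamma> \<alpha> \<beta> (a!k) (xs!k) (xs!(Suc k mod length a)))"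
  by (simp add: cyc_prod_def Omega_t_exp exp_sum)

lemma sucmod: "k < m \<Longrightarrow> Suc k mod m = (if Suc k = m then 0 else Suc k)"
  by auto

lemma type_a_eq: "type_a (Suc N) x y = type_a N x y @ [(True, x N), (y N, False)]"
  by (simp add: type_a_def)
lemma type_b_eq: "type_b (Suc N) x y = type_b N x y @ [(False, x N), (y N, True)]"
  by (simp add: type_b_def)
lemma type_a_len: "length (type_a N x y) = 2*N"
  by (induction N) (simp_all add: type_a_def)
lemma type_b_len: "length (type_b N x y) = 2*N"
  by (induction N) (simp_all add: type_b_def)

lemma type_a_nth: "k < 2*N \<Longrightarrow> type_a N x y ! k = (if even k then (True, x (k div 2)) else (y (k div 2), False))"
proof (induction N arbitrary: k)
  case 0 then show ?case by simp
next
  case (Suc N)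
  have "k < 2*N \<or> k = 2*N \<or> k = 2*N+1" using Suc.prems by auto
  then show ?case
    by (elim disjE) (auto simp: type_a_eq nth_append type_a_len Suc.IH)
qed

lemma type_b_nth: "k < 2*N \<Longrightarrow> type_b N x y ! k = (if even k then (False, x (k div 2)) else (y (k div 2), True))"
proof (induction N arbitrary: k)
  case 0 then show ?case by simp
next
  case (Suc N)
  have "k < 2*N \<or> k = 2*N \<or> k = 2*N+1" using Suc.prems by auto
  then show ?case
    by (elim disjE) (auto simp: type_b_eq nth_append type_b_len Suc.IH)
qed

lemma cnt_type_a: "cnt (type_a N x y) = (\<Sum>k<N. of_bool (x k))"
  by (induction N) (simp_all add: type_a_eq cnt_def g11_def, simp add: type_a_def)
lemma cnt_type_b: "cnt (type_b N x y) = (\<Sum>k<N. of_bool (y k))"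
  by (induction N) (simp_all add: type_b_eq cnt_def g11_def, simp add: type_b_def)

lemma c0_of_cnt: "c0_of N x y = cnt (type_a N x y) - cnt (type_b N x y)"
  by (simp add: c0_of_def cnt_type_a cnt_type_b)

lemma cnt_sum: "cnt a = (\<Sum>k<length a. g11 (a!k))"
  by (simp add: cnt_def sum_list_sum_nth atLeast0LessThan)



lemma Kc_pos: "Kc \<rho> \<gamma> \<alpha> \<beta> i j > 0"
  unfolding Kc_def by (intro divide_pos_pos add_pos_pos) auto

lemma Omega_pos: "Omega \<rho> \<gamma> \<alpha> \<beta> c i j > 0"
  unfolding Omega_def Omega_t_exp using Kc_pos by simp

lemma fin_dt: "finite (dist_tuples n m)"
proof (rule finite_subset)
  show "dist_tuples n m \<subseteq> {xs. set xs \<subseteq> {..<n} \<and> length xs = m}"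
    by (auto simp: dist_tuples_def)
  show "finite {xs. set xs \<subseteq> {..<n} \<and> length xs = m}"
    by (rule finite_lists_length_eq) simp
qed

lemma upt_dt: "m \<le> n \<Longrightarrow> [0..<m] \<in> dist_tuples n m"
  by (auto simp: dist_tuples_def)

lemma cyc_split: "length c = m \<Longrightarrow> cyc_prod (Omega \<rho> \<gamma> \<alpha> \<beta>) c xs =
   (\<Prod>k<m. Kc \<rho> \<gamma> \<alpha> \<beta> (xs!k) (xs!(Suc k mod m))) * cyc_prod (Omega_t \<rho> \<gamma> \<alpha> \<beta>) c xs"
  by (simp add: cyc_prod_def Omega_def prod.distrib)

lemma part_i:
  assumes "length a = m" "length b = m" "m \<le> n" "star_at \<rho> \<gamma> \<alpha> \<beta> n a b c0"
  shows "g_nm \<rho> \<gamma> \<alpha> \<beta> n a / g_nm \<rho> \<gamma> \<alpha> \<beta> n b = exp (c0 * \<rho>)"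
proof -
  have eq: "cyc_prod (Omega \<rho> \<gamma> \<alpha> \<beta>) a xs = exp (c0 * \<rho>) * cyc_prod (Omega \<rho> \<gamma> \<alpha> \<beta>) b xs"
    if "xs \<in> dist_tuples n m" for xs
    using assms that by (simp add: cyc_split star_at_def)
  have ga: "g_nm \<rho> \<gamma> \<alpha> \<beta> n a = exp (c0 * \<rho>) * g_nm \<rho> \<gamma> \<alpha> \<beta> n b"
    unfolding g_nm_def using assms eq by (simp add: sum_distrib_left)
  have "g_nm \<rho> \<gamma> \<alpha> \<beta> n b > 0"
    unfolding g_nm_def using assms(2) fin_dt upt_dt[OF assms(3)]
    by (intro sum_pos) (auto simp: cyc_prod_def Omega_pos intro!: prod_pos)
  then show ?thesis using ga by simp
qed

lemma star_sum:
  assumes "star_at \<rho> \<gamma> \<alpha> \<beta> n a b c0" "length a = m" "length b = m" "m \<le> n"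
  shows "(\<Sum>k<m. Lc \<rho> \<gamma> \<alpha> \<beta> (a!k) k (Suc k mod m)) = c0*\<rho> + (\<Sum>k<m. Lc \<rho> \<gamma> \<alpha> \<beta> (b!k) k (Suc k mod m))"
proof -
  have "cyc_prod (Omega_t \<rho> \<gamma> \<alpha> \<beta>) a [0..<m] = exp (c0 * \<rho>) * cyc_prod (Omega_t \<rho> \<gamma> \<alpha> \<beta>) b [0..<m]"
    using assms upt_dt[OF assms(4)] by (simp add: star_at_def)
  moreover have "\<And>c. length c = m \<Longrightarrow> cyc_prod (Omega_t \<rho> \<gamma> \<alpha> \<beta>) c [0..<m] =
      exp (\<Sum>k<m. Lc \<rho> \<gamma> \<alpha> \<beta> (c!k) k (Suc k mod m))"
  proof -
    fix c :: "code list" assume "length c = m"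
    then show "cyc_prod (Omega_t \<rho> \<gamma> \<alpha> \<beta>) c [0..<m] = exp (\<Sum>k<m. Lc \<rho> \<gamma> \<alpha> \<beta> (c!k) k (Suc k mod m))"
      unfolding cyc_exp by (intro arg_cong[where f=exp] sum.cong) auto
  qed
  ultimately have "exp (\<Sum>k<m. Lc \<rho> \<gamma> \<alpha> \<beta> (a!k) k (Suc k mod m)) = exp (c0*\<rho> + (\<Sum>k<m. Lc \<rho> \<gamma> \<alpha> \<beta> (b!k) k (Suc k mod m)))"
    using assms by (simp add: exp_add)
  then show ?thesis by simp
qed

lemma star_sum_id:
  assumes "star_ident n a b c0" "length a = m" "length b = m" "m \<le> n" "admissible n \<alpha> \<beta>"
  shows "(\<Sum>k<m. Lc \<rho> \<gamma> \<alpha> \<beta> (a!k) k (Suc k mod m)) = c0*\<rho> + (\<Sum>k<m. Lc \<rho> \<gamma> \<alpha> \<beta> (b!k) k (Suc k mod m))"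
  using assms star_sum unfolding star_ident_def by blast

lemma ext_cnt:
  assumes "star_ident n a b c0" "length a = m" "length b = m" "m \<le> n"
  shows "cnt a = c0 + cnt b"
proof -
  have "admissible n (\<lambda>_. 0) (\<lambda>_. 0)" by (simp add: admissible_def)
  from star_sum_id[OF assms this, of 1 0] show ?thesis
    using assms by (simp add: Lc_def cnt_sum)
qed

lemma sucmod_inj: "j < m \<Longrightarrow> k < m \<Longrightarrow> (Suc j mod m = Suc k mod m) = (j = k)"
  by (auto simp: sucmod split: if_splits)

lemma delta_adm:
  assumes "s < n"
  shows "(\<Sum>i<n. (if i = s then 1 else 0) - 1 / real n) = 0"
proof -
  have "(\<Sum>i<n. (if i = s then 1 else (0::real))) = 1" using assms by simp
  then show ?thesis using assms by (simp add: sum_subtractf)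
qed

lemma ext_alpha:
  assumes "star_ident n a b c0" "length a = m" "length b = m" "m \<le> n" "k < m"
  shows "f1 (a!(Suc k mod m)) + f2 (a!k) = f1 (b!(Suc k mod m)) + f2 (b!k)"
proof -
  define s where "s = Suc k mod m"
  have sm: "s < m" using assms(5) by (simp add: s_def)
  define d where "d = (\<lambda>i. if i = s then 1 else (0::real))"
  have "admissible n (\<lambda>i. d i - 1 / real n) (\<lambda>_. 0)"
    using delta_adm[of s n] sm assms(4) by (simp add: admissible_def d_def)
  from star_sum_id[OF assms(1-4) this, of 0 "1 / real n"]
  have E: "(\<Sum>j<m. f1 (a!j) * d j + f2 (a!j) * d (Suc j mod m)) = (\<Sum>j<m. f1 (b!j) * d j + f2 (b!j) * d (Suc j mod m))"
    by (simp add: Lc_def algebra_simps)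
  have S: "(\<Sum>j<m. f1 (c!j) * d j + f2 (c!j) * d (Suc j mod m)) = f1 (c!s) + f2 (c!k)" for c
  proof -
    have "(\<Sum>j<m. f1 (c!j) * d j + f2 (c!j) * d (Suc j mod m)) = (\<Sum>j<m. (if j = s then f1 (c!s) else 0) + (if j = k then f2 (c!k) else 0))"
      using assms(5) by (intro sum.cong) (auto simp: d_def s_def sucmod_inj)
    also have "\<dots> = f1 (c!s) + f2 (c!k)" using sm assms(5) by (simp add: sum.distrib)
    finally show ?thesis .
  qed
  show ?thesis using E S[of a] S[of b] by (simp add: s_def)
qed

lemma ext_beta:
  assumes "star_ident n a b c0" "length a = m" "length b = m" "m \<le> n" "k < m"
  shows "f2 (a!(Suc k mod m)) + f1 (a!k) = f2 (b!(Suc k mod m)) + f1 (b!k)"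
proof -
  define s where "s = Suc k mod m"
  have sm: "s < m" using assms(5) by (simp add: s_def)
  define d where "d = (\<lambda>i. if i = s then 1 else (0::real))"
  have "admissible n (\<lambda>_. 0) (\<lambda>i. d i - 1 / real n)"
    using delta_adm[of s n] sm assms(4) by (simp add: admissible_def d_def)
  from star_sum_id[OF assms(1-4) this, of 0 "1 / real n"]
  have E: "(\<Sum>j<m. f2 (a!j) * d j + f1 (a!j) * d (Suc j mod m)) = (\<Sum>j<m. f2 (b!j) * d j + f1 (b!j) * d (Suc j mod m))"
    by (simp add: Lc_def algebra_simps)
  have S: "(\<Sum>j<m. f2 (c!j) * d j + f1 (c!j) * d (Suc j mod m)) = f2 (c!s) + f1 (c!k)" for c
  proof -
    have "(\<Sum>j<m. f2 (c!j) * d j + f1 (c!j) * d (Suc j mod m)) = (\<Sum>j<m. (if j = s then f2 (c!s) else 0) + (if j = k then f1 (c!k) else 0))"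
      using assms(5) by (intro sum.cong) (auto simp: d_def s_def sucmod_inj)
    also have "\<dots> = f2 (c!s) + f1 (c!k)" using sm assms(5) by (simp add: sum.distrib)
    finally show ?thesis .
  qed
  show ?thesis using E S[of a] S[of b] by (simp add: s_def)
qed



definition uu :: "code list \<Rightarrow> code list \<Rightarrow> nat \<Rightarrow> real" where "uu a b k = f1 (a!k) - f1 (b!k)"
definition vv :: "code list \<Rightarrow> code list \<Rightarrow> nat \<Rightarrow> real" where "vv a b k = f2 (a!k) - f2 (b!k)"

lemma rel_alpha:
  assumes "star_ident n a b c0" "length a = m" "length b = m" "m \<le> n" "k < m"
  shows "uu a b (Suc k mod m) + vv a b k = 0"
  using ext_alpha[OF assms] by (simp add: uu_def vv_def)

lemma rel_beta:
  assumes "star_ident n a b c0" "length a = m" "length b = m" "m \<le> n" "k < m"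
  shows "uu a b k + vv a b (Suc k mod m) = 0"
  using ext_beta[OF assms] by (simp add: uu_def vv_def)

lemma per2:
  assumes "star_ident n a b c0" "length a = m" "length b = m" "m \<le> n" "k < m"
  shows "uu a b ((k+2) mod m) = uu a b k"
proof -
  have s: "Suc k mod m < m" using assms(5) by simp
  have "Suc (Suc k mod m) mod m = (k+2) mod m" by (simp add: mod_Suc_eq)
  then show ?thesis using rel_alpha[OF assms(1-4) s] rel_beta[OF assms] by simp
qed

lemma iter2:
  fixes h :: "nat \<Rightarrow> real" and k m j :: nat
  assumes "\<And>k. k < m \<Longrightarrow> h ((k+2) mod m) = h k" "k < m"
  shows "h ((k + 2*j) mod m) = h k"
proof (induction j)
  case 0 then show ?case using assms(2) by simp
next
  case (Suc j)
  have "(k + 2*Suc j) mod m = ((k + 2*j) mod m + 2) mod m" by (simp add: mod_simps)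
  also have "h \<dots> = h ((k + 2*j) mod m)" using assms(1)[of "(k + 2*j) mod m"] assms(2) by simp
  finally show ?case using Suc by simp
qed

lemma g11_eq: "f1 c - f1 d + (f2 c - f2 d) = 0 \<Longrightarrow> g11 c = g11 d"
  by (cases c; cases d; rename_tac p q r t; case_tac p; case_tac q; case_tac r; case_tac t) (simp_all add: f1_def f2_def g11_def)

lemma g11_diff: "f1 c - f1 d = f2 c - f2 d \<Longrightarrow> g11 c - g11 d = f1 c - f1 d"
  by (cases c; cases d; rename_tac p q r t; case_tac p; case_tac q; case_tac r; case_tac t) (simp_all add: f1_def f2_def g11_def)

lemma part_ii:
  assumes "star_ident n a b c0" "length a = m" "length b = m" "m \<le> n" "odd m"
  shows "c0 = 0"
proof -
  have m0: "m > 0" using assms(5) by (cases m) auto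
  have u: "uu a b (Suc k mod m) = uu a b k" if "k < m" for k
  proof -
    obtain t where t: "m = 2*t+1" using assms(5) by (rule oddE)
    have "k + 2 * ((m+1) div 2) = Suc k + m" using t by simp
    moreover have "(Suc k + m) mod m = Suc k mod m" by (rule mod_add_self2)
    ultimately have "(k + 2 * ((m+1) div 2)) mod m = Suc k mod m" by simp
    then show ?thesis using iter2[of m "uu a b" k "(m+1) div 2"] per2[OF assms(1-4)] that by simp
  qed
  have "g11 (a!k) = g11 (b!k)" if "k < m" for k
    using rel_alpha[OF assms(1-4) that] u[OF that] by (intro g11_eq) (simp add: uu_def vv_def)
  then have "cnt a = cnt b" using assms(2,3) by (simp add: cnt_sum)
  then show ?thesis using ext_cnt[OF assms(1-4)] by simp
qed

definition Pat :: "real \<Rightarrow> real \<Rightarrow> code list \<Rightarrow> code list \<Rightarrow> bool" where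
  "Pat p q a b \<longleftrightarrow> length a = length b \<and>
     (\<forall>k<length a. uu a b k = (if even k then p else q) \<and> vv a b k = (if even k then -q else -p))"

lemma even_sucmod: "even m \<Longrightarrow> even (Suc k mod m) = odd k"
  by (metis dvd_mod_iff even_Suc)

lemma pat_ident:
  assumes "star_ident n a b c0" "length a = m" "length b = m" "m \<le> n" "even m" "3 \<le> m"
  shows "Pat (uu a b 0) (uu a b 1) a b"
proof -
  have u: "uu a b k = uu a b (k mod 2)" if "k < m" for k
  proof -
    have "(k mod 2 + 2 * (k div 2)) mod m = k" using that by simp
    then show ?thesis using iter2[of m "uu a b" "k mod 2" "k div 2"] per2[OF assms(1-4)] assms(6) by simp
  qed
  have uu': "uu a b k = (if even k then uu a b 0 else uu a b 1)" if "k < m" for k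
    using u[OF that] by (simp add: even_iff_mod_2_eq_zero odd_iff_mod_2_eq_one)
  have vvu: "vv a b k = - uu a b (Suc k mod m)" if "k < m" for k
    using rel_alpha[OF assms(1-4) that] by simp
  have vv': "vv a b k = (if even k then - uu a b 1 else - uu a b 0)" if "k < m" for k
  proof -
    have s: "Suc k mod m < m" using that by simp
    show ?thesis
    proof (cases "even k")
      case True
      then have "odd (Suc k mod m)" using even_sucmod[OF assms(5), of k] by simp
      then show ?thesis using uu'[OF s] vvu[OF that] True by simp
    next
      case False
      then have "even (Suc k mod m)" using even_sucmod[OF assms(5), of k] by simp
      then show ?thesis using uu'[OF s] vvu[OF that] False by simp
    qed
  qed
  show ?thesis unfolding Pat_def using uu' vv' assms(2,3) by simp
qed



definition refl_c :: "code list \<Rightarrow> code list" where "refl_c a = map prod.swap (rev a)"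

lemma refl_len: "length (refl_c a) = length a" by (simp add: refl_c_def)
lemma refl_nth: "k < length a \<Longrightarrow> refl_c a ! k = prod.swap (a ! (length a - Suc k))"
  by (simp add: refl_c_def rev_nth)

lemma cnt_rot: "cnt (rotate1 a) = cnt a"
  by (cases a) (simp_all add: cnt_def)
lemma cnt_refl: "cnt (refl_c a) = cnt a"
proof -
  have "g11 \<circ> prod.swap = g11" by (auto simp: g11_def)
  then show ?thesis by (simp add: cnt_def refl_c_def rev_map[symmetric] sum_list_rev)
qed

lemma f1_swap: "f1 (prod.swap c) = f2 c" by (simp add: f1_def f2_def)
lemma f2_swap: "f2 (prod.swap c) = f1 c" by (simp add: f1_def f2_def)

lemma pat_rot:
  assumes "Pat p q a b" "even (length a)" "length a > 0"
  shows "Pat q p (rotate1 a) (rotate1 b)"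
proof -
  have lb: "length b = length a" using assms(1) by (simp add: Pat_def)
  have L: "length (rotate1 a) = length (rotate1 b)" using lb by simp
  have "\<forall>k<length (rotate1 a). uu (rotate1 a) (rotate1 b) k = (if even k then q else p) \<and>
          vv (rotate1 a) (rotate1 b) k = (if even k then - p else - q)"
  proof (intro allI impI)
    fix k assume "k < length (rotate1 a)"
    then have k: "k < length a" by simp
    have s: "Suc k mod length a < length a" using assms(3) by simp
    have e: "even (Suc k mod length a) = odd k" using even_sucmod[OF assms(2)] .
    have "uu (rotate1 a) (rotate1 b) k = uu a b (Suc k mod length a)"
      "vv (rotate1 a) (rotate1 b) k = vv a b (Suc k mod length a)"
      using k lb by (simp_all add: uu_def vv_def nth_rotate1)
    then show "uu (rotate1 a) (rotate1 b) k = (if even k then q else p) \<and>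
          vv (rotate1 a) (rotate1 b) k = (if even k then - p else - q)"
      using assms(1) s e unfolding Pat_def by auto
  qed
  then show ?thesis unfolding Pat_def using L by blast
qed

lemma pat_refl:
  assumes "Pat p q a b" "even (length a)"
  shows "Pat (-p) (-q) (refl_c a) (refl_c b)"
proof -
  have lb: "length b = length a" using assms(1) by (simp add: Pat_def)
  have L: "length (refl_c a) = length (refl_c b)" using lb by (simp add: refl_len)
  have "\<forall>k<length (refl_c a). uu (refl_c a) (refl_c b) k = (if even k then - p else - q) \<and>
          vv (refl_c a) (refl_c b) k = (if even k then - (- q) else - (- p))"
  proof (intro allI impI)
    fix k assume "k < length (refl_c a)"
    then have k: "k < length a" by (simp add: refl_len)
    have s: "length a - Suc k < length a" using k by simp
    have e: "even (length a - Suc k) = odd k" using assms(2) k by (auto simp: even_diff_nat)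
    have "uu (refl_c a) (refl_c b) k = vv a b (length a - Suc k)"
      "vv (refl_c a) (refl_c b) k = uu a b (length a - Suc k)"
      using k lb by (simp_all add: uu_def vv_def refl_nth f1_swap f2_swap)
    then show "uu (refl_c a) (refl_c b) k = (if even k then - p else - q) \<and>
          vv (refl_c a) (refl_c b) k = (if even k then - (- q) else - (- p))"
      using assms(1) s e unfolding Pat_def by auto
  qed
  then show ?thesis unfolding Pat_def using L by blast
qed

lemma pat_type: "Pat 1 0 (type_a N x y) (type_b N x y)"
  unfolding Pat_def
  by (auto simp: type_a_len type_b_len type_a_nth type_b_nth uu_def vv_def f1_def f2_def)

lemma pat_to_type:
  assumes "Pat 1 0 a b" "length a = 2*N"
  shows "a = type_a N (\<lambda>j. snd (a!(2*j))) (\<lambda>j. fst (a!(2*j+1)))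
       \<and> b = type_b N (\<lambda>j. snd (a!(2*j))) (\<lambda>j. fst (a!(2*j+1)))"
proof -
  have lb: "length b = 2*N" using assms by (simp add: Pat_def)
  have P: "uu a b k = (if even k then 1 else 0) \<and> vv a b k = (if even k then 0 else -1)" if "k < 2*N" for k
    using assms that unfolding Pat_def by auto
  have A: "a!k = type_a N (\<lambda>j. snd (a!(2*j))) (\<lambda>j. fst (a!(2*j+1))) ! k
      \<and> b!k = type_b N (\<lambda>j. snd (a!(2*j))) (\<lambda>j. fst (a!(2*j+1))) ! k" if k: "k < 2*N" for k
  proof (cases "even k")
    case True
    then have kk: "2 * (k div 2) = k" by simp
    obtain p1 p2 where ak: "a!k = (p1,p2)" by (cases "a!k")
    obtain r1 r2 where bk: "b!k = (r1,r2)" by (cases "b!k")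
    have "p1 \<and> \<not> r1 \<and> p2 = r2" using P[OF k] True ak bk
      by (cases p1; cases p2; cases r1; cases r2) (simp_all add: uu_def vv_def f1_def f2_def)
    then show ?thesis using k True kk ak bk by (simp add: type_a_nth type_b_nth)
  next
    case False
    then have kk: "2 * (k div 2) + 1 = k" by simp
    obtain p1 p2 where ak: "a!k = (p1,p2)" by (cases "a!k")
    obtain r1 r2 where bk: "b!k = (r1,r2)" by (cases "b!k")
    have "p1 = r1 \<and> \<not> p2 \<and> r2" using P[OF k] False ak bk
      by (cases p1; cases p2; cases r1; cases r2) (simp_all add: uu_def vv_def f1_def f2_def)
    then show ?thesis using k False kk ak bk by (simp add: type_a_nth type_b_nth)
  qed
  show ?thesis
    using A assms(2) lb by (auto intro!: nth_equalityI simp: type_a_len type_b_len)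
qed

lemma alt_sum: "(\<Sum>k<2*N. (if even k then p else q)) = real N * (p + q)"
  by (induction N) (auto simp: algebra_simps)

lemma pat_bad1:
  assumes "Pat p p a b"
  shows "cnt a = cnt b"
proof -
  have "g11 (a!k) = g11 (b!k)" if "k < length a" for k
    using assms that unfolding Pat_def by (intro g11_eq) (auto simp: uu_def vv_def)
  then show ?thesis using assms by (simp add: cnt_sum Pat_def)
qed

lemma pat_bad2:
  assumes "Pat p (-p) a b" "length a = 2*N"
  shows "cnt a = cnt b"
proof -
  have lb: "length b = 2*N" using assms by (simp add: Pat_def)
  have "g11 (a!k) - g11 (b!k) = (if even k then p else -p)" if "k < 2*N" for k
  proof -
    have "f1 (a!k) - f1 (b!k) = f2 (a!k) - f2 (b!k)" "f1 (a!k) - f1 (b!k) = (if even k then p else -p)"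
      using assms that unfolding Pat_def by (auto simp: uu_def vv_def)
    then show ?thesis using g11_diff by metis
  qed
  then have "cnt a - cnt b = (\<Sum>k<2*N. (if even k then p else -p))"
    using assms(2) lb by (simp add: cnt_sum sum_subtractf[symmetric])
  also have "\<dots> = 0" by (simp add: alt_sum)
  finally show ?thesis by simp
qed



lemma cd_mem: "length a = m \<Longrightarrow> x < m \<Longrightarrow> y < m \<Longrightarrow>
  (x, y) \<in> cycle_digraph a \<longleftrightarrow> (y = Suc x mod m \<and> fst (a!x)) \<or> (x = Suc y mod m \<and> snd (a!y))"
  by (auto simp: cycle_digraph_def)

lemma iso_refl: "cycles_iso a a"
  unfolding cycles_iso_def digraph_iso_def by (intro conjI exI[of _ id]) auto

lemma iso_trans: assumes "cycles_iso a b" "cycles_iso b c" shows "cycles_iso a c"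
proof -
  from assms obtain f g where f: "bij_betw f {..<length a} {..<length a}"
    "\<forall>u<length a. \<forall>v<length a. (u, v) \<in> cycle_digraph a \<longleftrightarrow> (f u, f v) \<in> cycle_digraph b"
    and g: "bij_betw g {..<length a} {..<length a}"
    "\<forall>u<length a. \<forall>v<length a. (u, v) \<in> cycle_digraph b \<longleftrightarrow> (g u, g v) \<in> cycle_digraph c"
    and l: "length a = length b" "length b = length c"
    unfolding cycles_iso_def digraph_iso_def by auto
  have "bij_betw (g \<circ> f) {..<length a} {..<length a}" using f(1) g(1) by (rule bij_betw_trans)
  moreover have "\<forall>u<length a. \<forall>v<length a. (u, v) \<in> cycle_digraph a \<longleftrightarrow> ((g \<circ> f) u, (g \<circ> f) v) \<in> cycle_digraph c"
  proof (intro allI impI)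
    fix u v assume uv: "u < length a" "v < length a"
    then have "f u < length a" "f v < length a" using bij_betw_apply[OF f(1)] by auto
    then show "(u, v) \<in> cycle_digraph a \<longleftrightarrow> ((g \<circ> f) u, (g \<circ> f) v) \<in> cycle_digraph c"
      using f(2) g(2) uv by simp
  qed
  ultimately show ?thesis using l unfolding cycles_iso_def digraph_iso_def by auto
qed

lemma rot_ar: "u < m \<Longrightarrow> v < m \<Longrightarrow> ((if v = 0 then m - 1 else v - 1) = u) = (v = Suc u mod m)"
  by (cases "Suc u = m") auto
lemma refl_ar1: assumes "u < m" "v < m" shows "((if v = 0 then 0 else m - v) = Suc (if u = 0 then 0 else m - u) mod m) = (u = Suc v mod m)"
proof -
  have p: "(if u = 0 then 0 else m - u) < m" using assms by auto
  show ?thesis unfolding sucmod[OF p] sucmod[OF assms(2)] using assms by (simp split: if_split) arith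
qed
lemma refl_ar2: "u < m \<Longrightarrow> v < m \<Longrightarrow> u = Suc v mod m \<Longrightarrow> m - Suc (if u = 0 then 0 else m - u) = v"
  by (cases "Suc v = m") auto

lemma iso_rot:
  assumes "length a = m" "m > 0"
  shows "cycles_iso a (rotate1 a)"
proof -
  define \<pi> where "\<pi> x = (if x = 0 then m - 1 else x - 1)" for x
  have bij: "bij_betw \<pi> {..<m} {..<m}"
  proof (rule bij_betwI')
    fix x y assume "x \<in> {..<m}" "y \<in> {..<m}"
    then show "(\<pi> x = \<pi> y) = (x = y)" by (auto simp: \<pi>_def)
  next
    fix x assume "x \<in> {..<m}" then show "\<pi> x \<in> {..<m}" using assms by (auto simp: \<pi>_def)
  next
    fix y assume y: "y \<in> {..<m}"
    show "\<exists>x\<in>{..<m}. y = \<pi> x"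
      using y rot_ar[of y m "Suc y mod m"] by (intro bexI[of _ "Suc y mod m"]) (auto simp: \<pi>_def)
  qed
  have pl: "\<pi> x < m" if "x < m" for x using that assms by (auto simp: \<pi>_def)
  have sp: "Suc (\<pi> x) mod m = x" if "x < m" for x
  proof -
    have "\<pi> x < m" using that assms by (auto simp: \<pi>_def)
    then show ?thesis unfolding sucmod[OF \<open>\<pi> x < m\<close>] using that assms by (auto simp: \<pi>_def)
  qed
  have "(u, v) \<in> cycle_digraph a \<longleftrightarrow> (\<pi> u, \<pi> v) \<in> cycle_digraph (rotate1 a)" if uv: "u < m" "v < m" for u v
  proof -
    have "(\<pi> u, \<pi> v) \<in> cycle_digraph (rotate1 a) \<longleftrightarrow>
        (\<pi> v = Suc (\<pi> u) mod m \<and> fst (a!u)) \<or> (\<pi> u = Suc (\<pi> v) mod m \<and> snd (a!v))"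
      using cd_mem[of "rotate1 a" m "\<pi> u" "\<pi> v"] assms pl uv sp by (simp add: nth_rotate1)
    also have "\<dots> \<longleftrightarrow> (\<pi> v = u \<and> fst (a!u)) \<or> (\<pi> u = v \<and> snd (a!v))"
      using uv sp by simp
    also have "\<dots> \<longleftrightarrow> (v = Suc u mod m \<and> fst (a!u)) \<or> (u = Suc v mod m \<and> snd (a!v))"
      using uv rot_ar[of u m v] rot_ar[of v m u] unfolding \<pi>_def by simp
    finally show ?thesis using cd_mem[of a m u v] assms uv by simp
  qed
  then show ?thesis using bij assms unfolding cycles_iso_def digraph_iso_def by auto
qed

lemma iso_reflc:
  assumes "length a = m" "m > 0"
  shows "cycles_iso a (refl_c a)"
proof -
  define \<pi> where "\<pi> x = (if x = 0 then 0 else m - x)" for x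
  have bij: "bij_betw \<pi> {..<m} {..<m}"
  proof (rule bij_betwI')
    fix x y assume "x \<in> {..<m}" "y \<in> {..<m}"
    then show "(\<pi> x = \<pi> y) = (x = y)" by (auto simp: \<pi>_def)
  next
    fix x assume "x \<in> {..<m}" then show "\<pi> x \<in> {..<m}" using assms by (auto simp: \<pi>_def)
  next
    fix y assume y: "y \<in> {..<m}"
    show "\<exists>x\<in>{..<m}. y = \<pi> x"
      using y by (intro bexI[of _ "\<pi> y"]) (auto simp: \<pi>_def)
  qed
  have pl: "\<pi> x < m" if "x < m" for x using that assms by (auto simp: \<pi>_def)
  have "(u, v) \<in> cycle_digraph a \<longleftrightarrow> (\<pi> u, \<pi> v) \<in> cycle_digraph (refl_c a)" if uv: "u < m" "v < m" for u v
  proof -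
    have "(\<pi> u, \<pi> v) \<in> cycle_digraph (refl_c a) \<longleftrightarrow>
        (\<pi> v = Suc (\<pi> u) mod m \<and> snd (a!(m - Suc (\<pi> u)))) \<or> (\<pi> u = Suc (\<pi> v) mod m \<and> fst (a!(m - Suc (\<pi> v))))"
      using cd_mem[of "refl_c a" m "\<pi> u" "\<pi> v"] assms pl uv by (simp add: refl_nth refl_len)
    also have "\<dots> \<longleftrightarrow> (u = Suc v mod m \<and> snd (a!(m - Suc (\<pi> u)))) \<or> (v = Suc u mod m \<and> fst (a!(m - Suc (\<pi> v))))"
      using uv refl_ar1[of u m v] refl_ar1[of v m u] unfolding \<pi>_def by simp
    also have "\<dots> \<longleftrightarrow> (u = Suc v mod m \<and> snd (a!v)) \<or> (v = Suc u mod m \<and> fst (a!u))"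
      using uv refl_ar2[of u m v] refl_ar2[of v m u] unfolding \<pi>_def by auto
    finally show ?thesis using cd_mem[of a m u v] assms uv by blast
  qed
  then show ?thesis using bij assms unfolding cycles_iso_def digraph_iso_def by (auto simp: refl_len)
qed



lemma sum_rot:
  fixes \<phi> :: "nat \<Rightarrow> real"
  assumes "m > 0"
  shows "(\<Sum>k<m. \<phi> (Suc k mod m)) = (\<Sum>k<m. \<phi> k)"
proof -
  obtain m' where m: "m = Suc m'" using assms by (cases m) auto
  have "(\<Sum>k<Suc m'. \<phi> (Suc k mod Suc m')) = (\<Sum>k<m'. \<phi> (Suc k mod Suc m')) + \<phi> 0"
    by (simp add: sum.lessThan_Suc)
  also have "(\<Sum>k<m'. \<phi> (Suc k mod Suc m')) = (\<Sum>k<m'. \<phi> (Suc k))"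
    by (intro sum.cong) auto
  also have "(\<Sum>k<m'. \<phi> (Suc k)) + \<phi> 0 = (\<Sum>k<Suc m'. \<phi> k)"
    by (subst sum.lessThan_Suc_shift) simp
  finally show ?thesis using m by simp
qed

lemma pat_point:
  assumes "Pat 1 0 a b" "length a = m" "even m" "k < m"
    and \<phi>_def: "\<phi> = (\<lambda>t. if even t then \<alpha> (xs!t) + \<gamma>/2 else - \<beta> (xs!t) - \<gamma>/2)"
  shows "Lc \<rho> \<gamma> \<alpha> \<beta> (a!k) (xs!k) (xs!(Suc k mod m)) =
     Lc \<rho> \<gamma> \<alpha> \<beta> (b!k) (xs!k) (xs!(Suc k mod m)) + (g11 (a!k) - g11 (b!k)) * \<rho> + \<phi> k - \<phi> (Suc k mod m)"
proof -
  have P: "uu a b k = (if even k then 1 else 0) \<and> vv a b k = (if even k then 0 else -1)"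
    using assms(1,2,4) unfolding Pat_def by auto
  obtain p1 p2 where ak: "a!k = (p1,p2)" by (cases "a!k")
  obtain r1 r2 where bk: "b!k = (r1,r2)" by (cases "b!k")
  show ?thesis
  proof (cases "even k")
    case True
    have "Suc k \<noteq> m" using True assms(3) by auto
    then have s: "Suc k mod m = Suc k" using assms(4) by simp
    have "p1 \<and> \<not> r1 \<and> p2 = r2" using P True ak bk
      by (cases p1; cases p2; cases r1; cases r2) (simp_all add: uu_def vv_def f1_def f2_def)
    then show ?thesis using True ak bk s unfolding \<phi>_def
      by (cases p2) (simp_all add: Lc_def g11_def f1_def f2_def algebra_simps)
  next
    case False
    have s: "even (Suc k mod m)" using even_sucmod[OF assms(3), of k] False by simp
    have "p1 = r1 \<and> \<not> p2 \<and> r2" using P False ak bk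
      by (cases p1; cases p2; cases r1; cases r2) (simp_all add: uu_def vv_def f1_def f2_def)
    then show ?thesis using False ak bk s unfolding \<phi>_def
      by (cases p1) (simp_all add: Lc_def g11_def f1_def f2_def algebra_simps)
  qed
qed

lemma pat_star:
  assumes "Pat 1 0 a b" "length a = m" "even m" "m > 0"
  shows "star_at \<rho> \<gamma> \<alpha> \<beta> n a b (cnt a - cnt b)"
  unfolding star_at_def
proof
  fix xs assume "xs \<in> dist_tuples n (length a)"
  define \<phi> where "\<phi> = (\<lambda>t. if even t then \<alpha> (xs!t) + \<gamma>/2 else - \<beta> (xs!t) - \<gamma>/2)"
  have lb: "length b = m" using assms by (simp add: Pat_def)
  have "(\<Sum>k<m. Lc \<rho> \<gamma> \<alpha> \<beta> (a!k) (xs!k) (xs!(Suc k mod m))) =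
     (\<Sum>k<m. Lc \<rho> \<gamma> \<alpha> \<beta> (b!k) (xs!k) (xs!(Suc k mod m)) + (g11 (a!k) - g11 (b!k)) * \<rho> + (\<phi> k - \<phi> (Suc k mod m)))"
    using pat_point[OF assms(1-3) _ \<phi>_def] by (intro sum.cong) auto
  also have "\<dots> = (\<Sum>k<m. Lc \<rho> \<gamma> \<alpha> \<beta> (b!k) (xs!k) (xs!(Suc k mod m))) + (cnt a - cnt b) * \<rho>"
    using sum_rot[OF assms(4), of \<phi>] assms(2) lb
    by (simp add: sum.distrib sum_subtractf cnt_sum sum_distrib_right[symmetric])
  finally have "exp (\<Sum>k<m. Lc \<rho> \<gamma> \<alpha> \<beta> (a!k) (xs!k) (xs!(Suc k mod m))) =
      exp ((cnt a - cnt b) * \<rho>) * exp (\<Sum>k<m. Lc \<rho> \<gamma> \<alpha> \<beta> (b!k) (xs!k) (xs!(Suc k mod m)))"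
    by (simp add: exp_add[symmetric] algebra_simps)
  then show "cyc_prod (Omega_t \<rho> \<gamma> \<alpha> \<beta>) a xs = exp ((cnt a - cnt b) * \<rho>) * cyc_prod (Omega_t \<rho> \<gamma> \<alpha> \<beta>) b xs"
    using assms(2) lb by (simp add: cyc_exp)
qed

lemma uu_range: "uu a b k = -1 \<or> uu a b k = 0 \<or> uu a b k = 1"
  by (cases "fst (a!k)"; cases "fst (b!k)") (simp_all add: uu_def f1_def)

lemma finish:
  assumes "Pat 1 0 a2 b2" "length a2 = 2*N" "cycles_iso a a2" "cycles_iso b b2" "cnt a2 - cnt b2 > 0"
  shows "\<exists>x y. c0_of N x y > 0 \<and> cycles_iso a (type_a N x y) \<and> cycles_iso b (type_b N x y)"
  using pat_to_type[OF assms(1,2)] assms(3-5) c0_of_cnt by metis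



theorem lemma1:
  fixes m n :: nat
  assumes m3: "m \<ge> 3" and nm: "n \<ge> m"
  shows
    "(\<forall>a b c0 \<rho> \<gamma> \<alpha> \<beta>. length a = m \<and> length b = m \<and> admissible n \<alpha> \<beta> \<and>
        star_at \<rho> \<gamma> \<alpha> \<beta> n a b c0 \<longrightarrow>
        g_nm \<rho> \<gamma> \<alpha> \<beta> n a / g_nm \<rho> \<gamma> \<alpha> \<beta> n b = exp (c0 * \<rho>))
   \<and> (odd m \<longrightarrow>
        \<not> (\<exists>a b c0. length a = m \<and> length b = m \<and> c0 > 0 \<and> star_ident n a b c0))
   \<and> (even m \<longrightarrow> (\<forall>x y. c0_of (m div 2) x y > 0 \<longrightarrow>
        star_ident n (type_a (m div 2) x y) (type_b (m div 2) x y) (c0_of (m div 2) x y) \<and>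
        (\<forall>\<rho> \<gamma> \<alpha> \<beta>. admissible n \<alpha> \<beta> \<longrightarrow>
           g_nm \<rho> \<gamma> \<alpha> \<beta> n (type_a (m div 2) x y) / g_nm \<rho> \<gamma> \<alpha> \<beta> n (type_b (m div 2) x y)
             = exp (c0_of (m div 2) x y * \<rho>))))
   \<and> (even m \<longrightarrow> (\<forall>a' b' c0. length a' = m \<and> length b' = m \<and> c0 > 0 \<and> star_ident n a' b' c0 \<longrightarrow>
        (\<exists>x y. c0_of (m div 2) x y > 0 \<and>
           cycles_iso a' (type_a (m div 2) x y) \<and> cycles_iso b' (type_b (m div 2) x y))))"
proof (intro conjI impI allI)
  show "g_nm \<rho> \<gamma> \<alpha> \<beta> n a / g_nm \<rho> \<gamma> \<alpha> \<beta> n b = exp (c0 * \<rho>)"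
    if "length a = m \<and> length b = m \<and> admissible n \<alpha> \<beta> \<and> star_at \<rho> \<gamma> \<alpha> \<beta> n a b c0"
    for a b c0 \<rho> \<gamma> \<alpha> \<beta>
    using part_i[of a m b n] that nm by blast
next
  assume "odd m"
  then show "\<not> (\<exists>a b c0. length a = m \<and> length b = m \<and> c0 > 0 \<and> star_ident n a b c0)"
    using part_ii[of n _ _ _ m] nm by force
next
  fix x y assume em: "even m" and c: "c0_of (m div 2) x y > 0"
  define N where "N = m div 2"
  have mN: "m = 2*N" using em by (simp add: N_def)
  have P: "Pat 1 0 (type_a N x y) (type_b N x y)" by (rule pat_type)
  have la: "length (type_a N x y) = m" by (simp add: type_a_len mN)
  have st: "star_at \<rho> \<gamma> \<alpha> \<beta> n (type_a N x y) (type_b N x y) (c0_of N x y)" for \<rho> \<gamma> \<alpha> \<beta>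
    using pat_star[OF P la em, of \<rho> \<gamma> \<alpha> \<beta> n] m3 by (simp add: c0_of_cnt)
  then show "star_ident n (type_a (m div 2) x y) (type_b (m div 2) x y) (c0_of (m div 2) x y)"
    by (simp add: star_ident_def N_def)
  fix \<rho> \<gamma> \<alpha> \<beta> assume "admissible n \<alpha> \<beta>"
  show "g_nm \<rho> \<gamma> \<alpha> \<beta> n (type_a (m div 2) x y) / g_nm \<rho> \<gamma> \<alpha> \<beta> n (type_b (m div 2) x y)
             = exp (c0_of (m div 2) x y * \<rho>)"
    using part_i[OF la _ nm st] la by (simp add: type_a_len type_b_len N_def)
next
  fix a' b' c0
  assume em: "even m" and H: "length a' = m \<and> length b' = m \<and> c0 > 0 \<and> star_ident n a' b' c0"
  define N where "N = m div 2"
  have mN: "m = 2*N" using em by (simp add: N_def)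
  have la: "length a' = m" and lb: "length b' = m" and c0: "c0 > 0" and si: "star_ident n a' b' c0"
    using H by auto
  have m0: "m > 0" using m3 by simp
  have cnt: "cnt a' - cnt b' = c0" using ext_cnt[OF si la lb nm] by simp
  define p where "p = uu a' b' 0"
  define q where "q = uu a' b' 1"
  have P: "Pat p q a' b'" unfolding p_def q_def using pat_ident[OF si la lb nm em m3] .
  have pr: "p = -1 \<or> p = 0 \<or> p = 1" "q = -1 \<or> q = 0 \<or> q = 1"
    unfolding p_def q_def by (rule uu_range)+
  have notbad1: "p \<noteq> q"
  proof
    assume "p = q" then have "cnt a' = cnt b'" using pat_bad1[of p a' b'] P by simp
    then show False using cnt c0 by simp
  qed
  have notbad2: "q \<noteq> -p"
  proof
    assume "q = -p" then have "cnt a' = cnt b'" using pat_bad2[of p a' b' N] P la mN by simp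
    then show False using cnt c0 by simp
  qed
  have ev: "even (length a')" using la em by simp
  have goal: "\<exists>x y. c0_of N x y > 0 \<and> cycles_iso a' (type_a N x y) \<and> cycles_iso b' (type_b N x y)"
  proof -
    consider "p = 1 \<and> q = 0" | "p = 0 \<and> q = 1" | "p = -1 \<and> q = 0" | "p = 0 \<and> q = -1"
      using pr notbad1 notbad2 by force
    then show ?thesis
    proof cases
      case 1
      then have "Pat 1 0 a' b'" using P by simp
      then show ?thesis using finish[of a' b' N a' b'] la mN iso_refl cnt c0 by simp
    next
      case 2
      then have "Pat 1 0 (rotate1 a') (rotate1 b')" using pat_rot[OF P ev] la m0 by simp
      then show ?thesis
        using finish[of "rotate1 a'" "rotate1 b'" N a' b'] la lb mN iso_rot[OF la m0] iso_rot[OF lb m0]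
          cnt c0 by (simp add: cnt_rot)
    next
      case 3
      then have "Pat 1 0 (refl_c a') (refl_c b')" using pat_refl[OF P ev] by simp
      then show ?thesis
        using finish[of "refl_c a'" "refl_c b'" N a' b'] la lb mN iso_reflc[OF la m0] iso_reflc[OF lb m0]
          cnt c0 by (simp add: cnt_refl refl_len)
    next
      case 4
      then have "Pat (-1) 0 (rotate1 a') (rotate1 b')" using pat_rot[OF P ev] la m0 by simp
      then have "Pat 1 0 (refl_c (rotate1 a')) (refl_c (rotate1 b'))"
        using pat_refl[of "-1" 0 "rotate1 a'" "rotate1 b'"] ev by simp
      moreover have "cycles_iso a' (refl_c (rotate1 a'))"
        using iso_trans[OF iso_rot[OF la m0] iso_reflc[of "rotate1 a'" m]] la m0 by simp
      moreover have "cycles_iso b' (refl_c (rotate1 b'))"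
        using iso_trans[OF iso_rot[OF lb m0] iso_reflc[of "rotate1 b'" m]] lb m0 by simp
      ultimately show ?thesis
        using finish[of "refl_c (rotate1 a')" "refl_c (rotate1 b')" N a' b'] la mN cnt c0
        by (simp add: cnt_refl cnt_rot refl_len)
    qed
  qed
  then show "\<exists>x y. c0_of (m div 2) x y > 0 \<and> cycles_iso a' (type_a (m div 2) x y) \<and> cycles_iso b' (type_b (m div 2) x y)"
    by (simp add: N_def)
qed


end
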